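(* The group $G$ contains 3-cycles.
   Context: Fix $m\in\mathbb{N}$, a prime power $q$, and $n\geq 3$. Let $\Delta=\mathrm{Gal}(\mathbb{F}_{q^m}:\mathbb{F}_q)$ act coordinatewise on $\mathbb{F}_{q^m}^n$; $\mathcal{X}$ is the union of orbits of size $m$, $\bar{\mathcal{X}}$ the set of these orbits. The tame automorphism group $\mathrm{TA}_n(\mathbb{F}_q)$ (generated by invertible affine maps and triangular maps $(a_1X_1+f_1,\dots,a_nX_n+f_n)$, $a_i\in\mathbb{F}_q^*$, $f_i\in\mathbb{F}_q[X_{i+1},\dots,X_n]$) acts on $\bar{\mathcal{X}}$, and $G$ is the image of $\mathrm{TA}_n(\mathbb{F}_q)\to\mathrm{Sym}(\bar{\mathcal{X}})$. *)

theory Defs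
  imports "HOL-Computational_Algebra.Primes"
begin

text \<open>Vectors of F_{q^m}^n are functions nat => 'a vanishing from index n on.
  The base field F_q is the fixed field of x |-> x^q inside the finite field 'a
  with q^m elements.\<close>

definition vecs :: "nat \<Rightarrow> (nat \<Rightarrow> 'a::zero) set" where
  "vecs n = {v. \<forall>i\<ge>n. v i = 0}"

definition baseF :: "nat \<Rightarrow> ('a::field) set" where
  "baseF q = {x. x ^ q = x}"

definition Gal :: "nat \<Rightarrow> ('a::field \<Rightarrow> 'a) set" where
  "Gal q = {s. bij s \<and> (\<forall>x y. s (x + y) = s x + s y) \<and> (\<forall>x y. s (x * y) = s x * s y)
              \<and> s 1 = 1 \<and> (\<forall>x\<in>baseF q. s x = x)}"

definition orbit :: "nat \<Rightarrow> (nat \<Rightarrow> 'a::field) \<Rightarrow> (nat \<Rightarrow> 'a) set" where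
  "orbit q v = {(\<lambda>i. s (v i)) | s. s \<in> Gal q}"

definition Xset :: "nat \<Rightarrow> nat \<Rightarrow> nat \<Rightarrow> (nat \<Rightarrow> 'a::field) set" where
  "Xset q m n = {v \<in> vecs n. card (orbit q v) = m}"

definition Xbar :: "nat \<Rightarrow> nat \<Rightarrow> nat \<Rightarrow> (nat \<Rightarrow> 'a::field) set set" where
  "Xbar q m n = orbit q ` Xset q m n"

inductive_set polyfun :: "'a::field set \<Rightarrow> nat set \<Rightarrow> ((nat \<Rightarrow> 'a) \<Rightarrow> 'a) set"
  for K :: "'a set" and S :: "nat set" where
  const: "c \<in> K \<Longrightarrow> (\<lambda>v. c) \<in> polyfun K S"
| var: "j \<in> S \<Longrightarrow> (\<lambda>v. v j) \<in> polyfun K S"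
| add: "f \<in> polyfun K S \<Longrightarrow> g \<in> polyfun K S \<Longrightarrow> (\<lambda>v. f v + g v) \<in> polyfun K S"
| mult: "f \<in> polyfun K S \<Longrightarrow> g \<in> polyfun K S \<Longrightarrow> (\<lambda>v. f v * g v) \<in> polyfun K S"

definition affine_maps :: "nat \<Rightarrow> nat \<Rightarrow> ((nat \<Rightarrow> 'a::field) \<Rightarrow> (nat \<Rightarrow> 'a)) set" where
  "affine_maps q n = {(\<lambda>v i. if i < n then (\<Sum>j<n. A i j * v j) + b i else 0) | A b.
      (\<forall>i<n. \<forall>j<n. A i j \<in> baseF q) \<and> (\<forall>i<n. b i \<in> baseF q) \<and>
      bij_betw (\<lambda>v i. if i < n then (\<Sum>j<n. A i j * v j) else 0)
        {v \<in> vecs n. \<forall>i. v i \<in> baseF q} {v \<in> vecs n. \<forall>i. v i \<in> baseF q}}"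

text \<open>Triangular maps (a_1 X_1 + f_1, ..., a_n X_n + f_n), 0-based indices,
  a_i in F_q nonzero, f_i in F_q[X_{i+1},...,X_{n-1}].\<close>
definition triangular_maps :: "nat \<Rightarrow> nat \<Rightarrow> ((nat \<Rightarrow> 'a::field) \<Rightarrow> (nat \<Rightarrow> 'a)) set" where
  "triangular_maps q n = {(\<lambda>v i. if i < n then a i * v i + f i v else 0) | a f.
      (\<forall>i<n. a i \<in> baseF q \<and> a i \<noteq> 0) \<and> (\<forall>i<n. f i \<in> polyfun (baseF q) {i+1..<n})}"

definition tame_gens :: "nat \<Rightarrow> nat \<Rightarrow> ((nat \<Rightarrow> 'a::field) \<Rightarrow> (nat \<Rightarrow> 'a)) set" where
  "tame_gens q n = affine_maps q n \<union> triangular_maps q n"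

text \<open>G: image of TA_n(F_q) in Sym(Xbar), generated by the permutations
  Y |-> F ` Y induced by the generators (finite, so monoid closure = group closure).
  Elements are considered only through their values on Xbar.\<close>
inductive_set Gimg :: "nat \<Rightarrow> nat \<Rightarrow> ((nat \<Rightarrow> 'a::field) set \<Rightarrow> (nat \<Rightarrow> 'a) set) set"
  for q :: nat and n :: nat where
  id: "(\<lambda>Y. Y) \<in> Gimg q n"
| step: "g \<in> Gimg q n \<Longrightarrow> F \<in> tame_gens q n \<Longrightarrow> (\<lambda>Y. F ` (g Y)) \<in> Gimg q n"

definition is_3cycle_on :: "'b set \<Rightarrow> ('b \<Rightarrow> 'b) \<Rightarrow> bool" where
  "is_3cycle_on X g \<longleftrightarrow> (\<exists>a\<in>X. \<exists>b\<in>X. \<exists>c\<in>X. a \<noteq> b \<and> b \<noteq> c \<and> a \<noteq> c \<and>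
      g a = b \<and> g b = c \<and> g c = a \<and> (\<forall>x\<in>X - {a, b, c}. g x = x))"

end

theory Submission imports Defs "HOL-Number_Theory.Residues" "HOL-Computational_Algebra.Polynomial"
begin



locale ffq =
  fixes q m :: nat and ty :: "'a::field itself"
  assumes fin: "finite (UNIV::'a set)" and card: "card (UNIV::'a set) = q^m"
    and qpow: "\<exists>p k. prime p \<and> k > 0 \<and> q = p ^ k"
begin

lemma char_prime: "prime CHAR('a)"
  using prime_CHAR_semidom[where ?'a='a] finite_imp_CHAR_pos[OF fin] by blast

lemma q_char: "\<exists>k>0. q = CHAR('a) ^ k"
proof -
  obtain p k where pk: "prime p" "k > 0" "q = p ^ k" using qpow by blast
  have "CHAR('a) dvd p ^ (k*m)" using CHAR_dvd_CARD[where ?'a='a] card pk by (simp add: power_mult)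
  hence "CHAR('a) dvd p" using char_prime prime_dvd_power by blast
  hence "CHAR('a) = p" using char_prime pk(1) by (simp add: primes_dvd_imp_eq)
  thus ?thesis using pk by auto
qed

lemma q_ge2: "q \<ge> 2"
proof -
  obtain k where "k>0" "q = CHAR('a)^k" using q_char by blast
  moreover have "CHAR('a) \<ge> 2" using char_prime prime_ge_2_nat by blast
  ultimately show ?thesis
    by (metis One_nat_def Suc_1 Suc_leD le_neq_implies_less less_one linorder_not_le nat_power_less_imp_less not_less_eq_eq power_one_right)
qed

lemma card_ge2: "card (UNIV::'a set) \<ge> 2"
proof -
  have "{0,1::'a} \<subseteq> UNIV" by auto
  hence "card {0,1::'a} \<le> card (UNIV::'a set)" using fin card_mono by blast
  thus ?thesis by simp
qed

lemma m_pos: "m > 0"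
  using card_ge2 card by (cases m) auto

lemma frob_add: "(x + y :: 'a) ^ (q^j) = x ^ (q^j) + y ^ (q^j)"
proof -
  obtain k where "q = CHAR('a)^k" using q_char by blast
  hence "q^j = CHAR('a)^(k*j)" by (simp add: power_mult)
  thus ?thesis by (intro freshmans_dream') (auto simp: char_prime)
qed

lemma frob_neg: "(- x :: 'a) ^ (q^j) = - (x ^ (q^j))"
proof -
  have "x ^ (q^j) + (-x)^(q^j) = (x + -x)^(q^j)" by (simp only: frob_add)
  also have "\<dots> = 0" using q_ge2 by simp
  finally show ?thesis by (simp add: add_eq_0_iff)
qed

lemma frob_diff: "(x - y :: 'a) ^ (q^j) = x ^ (q^j) - y ^ (q^j)"
  using frob_add[of x "-y" j] frob_neg[of y j] by simp

lemma pow_card: "(x::'a) ^ card (UNIV :: 'a set) = x"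
proof (cases "x = 0")
  case False
  have "x * (\<Prod>y\<in>UNIV-{0}. x * y) = x * x ^ (card (UNIV :: 'a set) - 1) * \<Prod>(UNIV-{0})"
    by (simp add: prod.distrib mult_ac fin)
  also have "x * x ^ (card (UNIV :: 'a set) - 1) = x ^ Suc (card (UNIV :: 'a set) - 1)"
    by (subst power_Suc) auto
  also have "Suc (card (UNIV :: 'a set) - 1) = card (UNIV :: 'a set)"
    using card_ge2 by simp
  also have "(\<Prod>y\<in>UNIV-{0}. x * y) = (\<Prod>y\<in>UNIV-{0}. y)"
    by (rule prod.reindex_bij_witness[of _ "\<lambda>y. y / x" "\<lambda>y. x * y"]) (use False in auto)
  finally show ?thesis
    using fin by (simp add: prod_zero_iff)
qed (use card_ge2 in auto)

lemma pow_Q: "(x::'a) ^ (q^m) = x" using pow_card card by simp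

lemma pow_Q1: "(x::'a) \<noteq> 0 \<Longrightarrow> x ^ (q^m - 1) = 1"
proof -
  assume "x \<noteq> 0"
  have "x * x ^ (q^m - 1) = x ^ Suc (q^m - 1)" by simp
  also have "Suc (q^m - 1) = q^m" using card_ge2 card by simp
  finally have "x * x ^ (q^m - 1) = x * 1" using pow_Q by simp
  thus ?thesis using \<open>x\<noteq>0\<close> by simp
qed

lemma frob_frob: "((x::'a) ^ (q^i)) ^ (q^j) = x ^ (q^(i+j))"
  by (simp add: power_mult power_add)


lemma frob_inj: "inj (\<lambda>x::'a. x ^ (q^j))"
proof (rule injI)
  fix x y :: 'a assume "x ^ (q^j) = y ^ (q^j)"
  hence "(x - y) ^ (q^j) = 0" by (simp add: frob_diff)
  moreover have "q^j \<noteq> 0" using q_ge2 by simp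
  ultimately show "x = y" by simp
qed

lemma frob_bij: "bij (\<lambda>x::'a. x ^ (q^j))"
  unfolding bij_def using frob_inj finite_UNIV_inj_surj[OF fin frob_inj] by (rule conjI)

lemma baseF_frob: "x \<in> baseF q \<Longrightarrow> (x::'a) ^ (q^j) = x"
  by (induction j) (auto simp: baseF_def power_mult)

lemma frob_Gal: "(\<lambda>x::'a. x ^ (q^j)) \<in> Gal q"
proof -
  have b: "bij (\<lambda>x::'a. x ^ (q^j))" by (rule frob_bij)
  have a: "\<forall>x y::'a. (x + y) ^ (q^j) = x ^ (q^j) + y ^ (q^j)" by (intro allI) (rule frob_add)
  have mu: "\<forall>x y::'a. (x * y) ^ (q^j) = x ^ (q^j) * y ^ (q^j)" by (intro allI) (rule power_mult_distrib)
  have fx: "\<forall>x\<in>baseF q. (x::'a) ^ (q^j) = x" by (intro ballI) (rule baseF_frob)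
  have one: "(1::'a) ^ (q^j) = 1" by (rule power_one)
  show ?thesis unfolding Gal_def mem_Collect_eq by (intro conjI b a mu fx one)
qed

end

lemma baseF_0[simp]: "q > 0 \<Longrightarrow> (0::'a::field) \<in> baseF q" by (simp add: baseF_def)
lemma baseF_1[simp]: "(1::'a::field) \<in> baseF q" by (simp add: baseF_def)

lemma Gal_add: "s \<in> Gal q \<Longrightarrow> s ((x::'a::field) + y) = s x + s y" unfolding Gal_def by blast
lemma Gal_mult: "s \<in> Gal q \<Longrightarrow> s ((x::'a::field) * y) = s x * s y" unfolding Gal_def by blast
lemma Gal_fix: "s \<in> Gal q \<Longrightarrow> x \<in> baseF q \<Longrightarrow> s (x::'a::field) = x" unfolding Gal_def by blast
lemma Gal_one: "s \<in> Gal q \<Longrightarrow> s (1::'a::field) = 1" unfolding Gal_def by blast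
lemma Gal_bij: "s \<in> Gal q \<Longrightarrow> bij (s::'a::field \<Rightarrow> 'a)" unfolding Gal_def by blast
lemma Gal_0: "s \<in> Gal q \<Longrightarrow> s (0::'a::field) = 0"
  using Gal_add[of s q 0 0] by (metis add.right_neutral add_cancel_right_right)

lemma Gal_inj: "s \<in> Gal q \<Longrightarrow> inj (s::'a::field \<Rightarrow> 'a)" using Gal_bij bij_is_inj by blast

lemma Gal_neg: "s \<in> Gal q \<Longrightarrow> s (- (x::'a::field)) = - s x"
proof -
  assume s: "s \<in> Gal q"
  have "s (-x) + s x = 0" using Gal_add[OF s, of "-x" x] Gal_0[OF s] by simp
  thus ?thesis by (simp add: add_eq_0_iff)
qed

lemma Gal_sum: "s \<in> Gal q \<Longrightarrow> s (\<Sum>j\<in>A. f j :: 'a::field) = (\<Sum>j\<in>A. s (f j))"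
  by (induction A rule: infinite_finite_induct) (simp_all add: Gal_0 Gal_add)

lemma Gal_prod: "s \<in> Gal q \<Longrightarrow> s (\<Prod>j\<in>A. f j :: 'a::field) = (\<Prod>j\<in>A. s (f j))"
  by (induction A rule: infinite_finite_induct) (simp_all add: Gal_one Gal_mult)

lemma Gal_id: "(\<lambda>x. x) \<in> Gal q" unfolding Gal_def by (simp add: bij_id[unfolded id_def])

lemma Gal_comp: "s \<in> Gal q \<Longrightarrow> t \<in> Gal q \<Longrightarrow> (\<lambda>x. s (t x)) \<in> Gal q"
proof -
  assume s: "s \<in> Gal q" and t: "t \<in> Gal q"
  have "bij (\<lambda>x. s (t x))" using bij_comp[OF Gal_bij[OF t] Gal_bij[OF s]] by (simp add: comp_def)
  thus ?thesis unfolding Gal_def using Gal_add[OF s] Gal_add[OF t] Gal_mult[OF s] Gal_mult[OF t]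
    Gal_one[OF s] Gal_one[OF t] Gal_fix[OF s] Gal_fix[OF t] by simp
qed

lemma Gal_inv: assumes s: "s \<in> Gal q" shows "inv_into UNIV s \<in> Gal q"
proof -
  have b: "bij s" using Gal_bij[OF s] .
  have si: "\<And>x. s (inv_into UNIV s x) = x" using b by (simp add: bij_is_surj surj_f_inv_f)
  have is_: "\<And>x. inv_into UNIV s (s x) = x" using b by (simp add: bij_is_inj inv_f_f)
  have "inv_into UNIV s (x + y) = inv_into UNIV s x + inv_into UNIV s y" for x y
  proof -
    have "s (inv_into UNIV s x + inv_into UNIV s y) = x + y" using Gal_add[OF s] si by simp
    hence "inv_into UNIV s (x + y) = inv_into UNIV s (s (inv_into UNIV s x + inv_into UNIV s y))" by simp
    thus ?thesis using is_ by simp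
  qed
  moreover have "inv_into UNIV s (x * y) = inv_into UNIV s x * inv_into UNIV s y" for x y
  proof -
    have "s (inv_into UNIV s x * inv_into UNIV s y) = x * y" using Gal_mult[OF s] si by simp
    hence "inv_into UNIV s (x * y) = inv_into UNIV s (s (inv_into UNIV s x * inv_into UNIV s y))" by simp
    thus ?thesis using is_ by simp
  qed
  moreover have "inv_into UNIV s 1 = 1"
  proof -
    have "s 1 = 1" using Gal_one[OF s] .
    hence "inv_into UNIV s 1 = inv_into UNIV s (s 1)" by simp
    also have "\<dots> = 1" by (rule is_)
    finally show ?thesis .
  qed
  moreover have "x \<in> baseF q \<Longrightarrow> inv_into UNIV s x = x" for x
    using Gal_fix[OF s, of x] is_[of x] by simp
  ultimately show ?thesis unfolding Gal_def mem_Collect_eq using bij_imp_bij_inv[OF b] by blast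
qed

lemma polyfun_Gal:
  assumes "f \<in> polyfun (baseF q) S" "s \<in> Gal q"
  shows "f (\<lambda>i. s (v i)) = s (f v)"
  using assms(1) by induction (auto simp: Gal_fix[OF assms(2)] Gal_add[OF assms(2)] Gal_mult[OF assms(2)])

lemma orbitI: "s \<in> Gal q \<Longrightarrow> (\<lambda>i. s (v i)) \<in> orbit q v"
  unfolding orbit_def by blast

lemma orbitE: "u \<in> orbit q v \<Longrightarrow> (\<And>s. s \<in> Gal q \<Longrightarrow> u = (\<lambda>i. s (v i)) \<Longrightarrow> P) \<Longrightarrow> P"
  unfolding orbit_def by blast

lemma orbit_self: "v \<in> orbit q v"
proof -
  have "(\<lambda>i. (\<lambda>x. x) (v i)) \<in> orbit q v" by (rule orbitI[OF Gal_id])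
  thus ?thesis by simp
qed

lemma orbit_trans: "u \<in> orbit q v \<Longrightarrow> w \<in> orbit q u \<Longrightarrow> w \<in> orbit q v"
proof -
  assume "u \<in> orbit q v" "w \<in> orbit q u"
  obtain s where s: "s \<in> Gal q" "u = (\<lambda>i. s (v i))" using \<open>u \<in> orbit q v\<close> by (rule orbitE)
  obtain t where t: "t \<in> Gal q" "w = (\<lambda>i. t (u i))" using \<open>w \<in> orbit q u\<close> by (rule orbitE)
  have "w = (\<lambda>i. (\<lambda>x. t (s x)) (v i))" using s t by simp
  thus ?thesis using orbitI[OF Gal_comp[OF t(1) s(1)], of v] by simp
qed

lemma orbit_sym: "u \<in> orbit q v \<Longrightarrow> v \<in> orbit q u"
proof -
  assume "u \<in> orbit q v"
  then obtain s where s: "s \<in> Gal q" "u = (\<lambda>i. s (v i))" by (rule orbitE)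
  have b: "bij s" using Gal_bij[OF s(1)] .
  have "v = (\<lambda>i. inv_into UNIV s (u i))" using s(2) b by (simp add: bij_is_inj inv_f_f)
  thus ?thesis using orbitI[OF Gal_inv[OF s(1)], of u] by simp
qed

lemma orbit_eq: assumes "u \<in> orbit q v" shows "orbit q u = orbit q v"
  using orbit_trans orbit_sym assms by blast

lemma orbit_coord: assumes "u \<in> orbit q v" "c \<in> baseF q" shows "u i = c \<longleftrightarrow> v i = c"
proof -
  obtain s where s: "s \<in> Gal q" "u = (\<lambda>i. s (v i))" using assms(1) by (rule orbitE)
  have "s (v i) = c \<longleftrightarrow> s (v i) = s c" using Gal_fix[OF s(1) assms(2)] by simp
  also have "\<dots> \<longleftrightarrow> v i = c" using Gal_inj[OF s(1)] by (simp add: inj_eq)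
  finally show ?thesis using s(2) by simp
qed

lemma polyfun_pow: "f \<in> polyfun K S \<Longrightarrow> 1 \<in> K \<Longrightarrow> (\<lambda>v. f v ^ k) \<in> polyfun K S"
proof (induction k)
  case 0 then show ?case using polyfun.const[of 1 K S] by simp
next
  case (Suc k) then show ?case using polyfun.mult[of f K S "\<lambda>v. f v ^ k"] by simp
qed

lemma polyfun_prod: "finite J \<Longrightarrow> (\<And>j. j \<in> J \<Longrightarrow> f j \<in> polyfun K S) \<Longrightarrow> 1 \<in> K \<Longrightarrow>
   (\<lambda>v. \<Prod>j\<in>J. f j v) \<in> polyfun K S"
proof (induction J rule: finite_induct)
  case empty then show ?case using polyfun.const[of 1 K S] by simp
next
  case (insert x F)
  have fx: "f x \<in> polyfun K S" using insert.prems(1) by simp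
  have IH: "(\<lambda>v. \<Prod>j\<in>F. f j v) \<in> polyfun K S"
    by (rule insert.IH) (simp_all add: insert.prems)
  have "(\<lambda>v. f x v * (\<Prod>j\<in>F. f j v)) \<in> polyfun K S"
    by (rule polyfun.mult[OF fx IH])
  then show ?case using insert by simp
qed

lemma polyfun_poly: "(\<And>i. coeff p i \<in> K) \<Longrightarrow> f \<in> polyfun K S \<Longrightarrow> (\<lambda>v. poly p (f v)) \<in> polyfun K S"
proof (induction p rule: pCons_induct)
  case 0
  have "(0::'a) \<in> K" using 0 coeff_0[where 'a='a] by metis
  then show ?case using polyfun.const[of 0 K S] by simp
next
  case (pCons a p)
  have a: "a \<in> K" using pCons.prems(1)[of 0] by simp
  have "coeff p i \<in> K" for i using pCons.prems(1)[of "Suc i"] by simp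
  hence "(\<lambda>v. poly p (f v)) \<in> polyfun K S" using pCons by blast
  have "(\<lambda>v. a + f v * poly p (f v)) \<in> polyfun K S"
    by (rule polyfun.add[OF polyfun.const[OF a] polyfun.mult[OF pCons.prems(2)]]) fact
  then show ?case by simp
qed

lemma polyfun_mono: "f \<in> polyfun K S \<Longrightarrow> S \<subseteq> T \<Longrightarrow> f \<in> polyfun K T"
proof (induction rule: polyfun.induct)
  case (const c) then show ?case using polyfun.const by blast
next
  case (var j) then show ?case using polyfun.var[of j T K] by blast
next
  case (add f g) then show ?case using polyfun.add by blast
next
  case (mult f g) then show ?case using polyfun.mult by blast
qed




context ffq begin

lemma sum_pow_less: "(\<Sum>j\<in>{1..<k}. q^j) < q^k"
proof (induction k)
  case 0 then show ?case by simp
next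
  case (Suc k)
  show ?case
  proof (cases "k = 0")
    case True then show ?thesis using q_ge2 by simp
  next
    case False
    have "(\<Sum>j\<in>{1..<Suc k}. q^j) = (\<Sum>j\<in>{1..<k}. q^j) + q^k"
      using False by (simp add: sum.atLeastLessThan_Suc)
    also have "\<dots> < q^k + q^k" using Suc.IH by simp
    also have "\<dots> \<le> q * q^k" using q_ge2 by (simp add: mult_2[symmetric])
    finally show ?thesis by simp
  qed
qed

lemma card_fix: assumes "j > 0" shows "card {x::'a. x^(q^j) = x} \<le> q^j"
proof -
  define p :: "'a poly" where "p = monom 1 (q^j) - monom 1 1"
  have N: "q^j \<ge> 2" using q_ge2 assms
    by (metis dual_order.trans power_increasing_iff less_one not_less_eq_eq power_one_right q_ge2 One_nat_def Suc_1 le_SucE linorder_not_le)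
  have "coeff p (q^j) = 1" using N by (simp add: p_def coeff_monom)
  hence "p \<noteq> 0" by auto
  have "degree p \<le> q^j" unfolding p_def
    by (meson degree_diff_le degree_monom_le le_trans N one_le_numeral order_trans)
  have "{x::'a. x^(q^j) = x} = {x. poly p x = 0}" by (auto simp: p_def poly_monom)
  thus ?thesis using card_poly_roots_bound[OF \<open>p\<noteq>0\<close>] \<open>degree p \<le> q^j\<close> by simp
qed

lemma theta_ex: "\<exists>\<theta>::'a. \<forall>j. 0 < j \<and> j < m \<longrightarrow> \<theta>^(q^j) \<noteq> \<theta>"
proof (rule ccontr)
  assume H: "\<not> ?thesis"
  have "UNIV \<subseteq> (\<Union>j\<in>{1..<m}. {x::'a. x^(q^j) = x})"
  proof
    fix x :: 'a
    from H obtain j where "0 < j" "j < m" "x^(q^j) = x" by blast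
    thus "x \<in> (\<Union>j\<in>{1..<m}. {x::'a. x^(q^j) = x})" by auto
  qed
  hence "card (UNIV::'a set) \<le> card (\<Union>j\<in>{1..<m}. {x::'a. x^(q^j) = x})"
    by (rule card_mono[OF finite_subset[OF subset_UNIV fin]])
  also have "\<dots> \<le> (\<Sum>j\<in>{1..<m}. card {x::'a. x^(q^j) = x})" by (rule card_UN_le) simp
  also have "\<dots> \<le> (\<Sum>j\<in>{1..<m}. q^j)" by (intro sum_mono card_fix) auto
  also have "\<dots> < q^m" by (rule sum_pow_less)
  finally show False using card by simp
qed

lemma conj_inj: assumes th: "\<forall>j. 0 < j \<and> j < m \<longrightarrow> \<theta>^(q^j) \<noteq> (\<theta>::'a)"
  shows "inj_on (\<lambda>j. \<theta>^(q^j)) {..<m}"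
proof -
  have *: False if "i < j" "j < m" "\<theta>^(q^i) = \<theta>^(q^j)" for i j
  proof -
    have "(\<theta>^(q^i))^(q^(m-j)) = (\<theta>^(q^j))^(q^(m-j))" using that by simp
    hence "\<theta>^(q^(i+(m-j))) = \<theta>^(q^(j+(m-j)))" by (simp only: frob_frob)
    also have "j + (m-j) = m" using that by simp
    finally have "\<theta>^(q^(i+(m-j))) = \<theta>" using pow_Q by simp
    moreover have "0 < i+(m-j)" "i+(m-j) < m" using that by auto
    ultimately show False using th by blast
  qed
  show ?thesis
    by (rule inj_onI) (metis * lessThan_iff linorder_neqE_nat)
qed

definition Pth :: "'a \<Rightarrow> 'a poly" where
  "Pth \<theta> = (\<Prod>j<m. [:-(\<theta>^(q^j)), 1:])"

lemma poly_Pth: "poly (Pth \<theta>) y = (\<Prod>j<m. y - \<theta>^(q^j))"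
  by (simp add: Pth_def poly_prod)

lemma Pth_root: "poly (Pth \<theta>) y = 0 \<longleftrightarrow> (\<exists>j<m. y = \<theta>^(q^j))"
  by (auto simp: poly_Pth)

lemma degree_Pth: "degree (Pth \<theta>) \<le> m"
proof -
  have "degree (Pth \<theta>) \<le> sum (degree \<circ> (\<lambda>j. [:-(\<theta>^(q^j)), 1::'a:])) {..<m}"
    unfolding Pth_def by (rule degree_prod_sum_le) simp
  also have "\<dots> = m" by simp
  finally show ?thesis .
qed

lemma frob1_add: "((x::'a) + y)^q = x^q + y^q" using frob_add[of x y 1] by simp
lemma frob1_mult: "((x::'a) * y)^q = x^q * y^q" by (simp add: power_mult_distrib)

lemma hom_eval: "poly (map_poly (\<lambda>x::'a. x^q) p) (y^q) = (poly p y)^q"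
proof (induction p rule: pCons_induct)
  case 0 then show ?case using q_ge2 by simp
next
  case (pCons a p)
  have z: "(0::'a)^q = 0" using q_ge2 by simp
  show ?case by (simp add: map_poly_pCons z pCons.IH frob1_add frob1_mult)
qed

lemma prod_shift_cyc: assumes "f m = f 0" shows "(\<Prod>j<m. f (Suc j)) = (\<Prod>j<m. (f j :: 'a))"
proof -
  obtain m' where m': "m = Suc m'" using m_pos by (cases m) auto
  have "(\<Prod>j<m. f (Suc j)) = (\<Prod>j<m'. f (Suc j)) * f (Suc m')" by (simp add: m')
  also have "\<dots> = f 0 * (\<Prod>j<m'. f (Suc j))" using assms m' by (simp add: mult.commute)
  also have "(\<Prod>j<m. f j) = f 0 * (\<Prod>j<m'. f (Suc j))" unfolding m' by (rule prod.lessThan_Suc_shift)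
  ultimately show ?thesis by simp
qed

lemma Pth_coeff: "coeff (Pth \<theta>) i \<in> baseF q"
proof -
  let ?phi = "\<lambda>x::'a. x^q"
  have z: "(0::'a)^q = 0" using q_ge2 by simp
  have ev: "poly (map_poly ?phi (Pth \<theta>)) z = poly (Pth \<theta>) z" for z
  proof -
    obtain y where y: "z = y^q" using frob_bij[of 1] by (auto simp: bij_def surj_def)
    have "poly (map_poly ?phi (Pth \<theta>)) z = (\<Prod>j<m. y - \<theta>^(q^j))^q"
      by (simp add: y hom_eval poly_Pth)
    also have "\<dots> = (\<Prod>j<m. (y - \<theta>^(q^j))^q)" by (simp add: prod_power_distrib)
    also have "\<dots> = (\<Prod>j<m. z - \<theta>^(q^(Suc j)))"
      using frob_diff[of y _ 1] frob_frob[of \<theta> _ 1] by (simp add: y)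
    also have "\<dots> = (\<Prod>j<m. z - \<theta>^(q^j))"
      by (rule prod_shift_cyc[where f = "\<lambda>j. z - \<theta>^(q^j)"]) (simp add: pow_Q)
    finally show ?thesis by (simp add: poly_Pth)
  qed
  have mq: "m < q^m"
    using q_ge2 less_exp[of m] power_mono[of 2 q m] by linarith
  have "map_poly ?phi (Pth \<theta>) = Pth \<theta>"
  proof (rule poly_eqI_degree[where A = UNIV])
    show "degree (Pth \<theta>) < card (UNIV::'a set)" using degree_Pth[of \<theta>] mq card by linarith
    show "degree (map_poly ?phi (Pth \<theta>)) < card (UNIV::'a set)"
      using degree_Pth[of \<theta>] mq card degree_map_poly[of ?phi "Pth \<theta>"] by simp
  qed (use ev in auto)
  hence "coeff (map_poly ?phi (Pth \<theta>)) i = coeff (Pth \<theta>) i" by simp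
  thus ?thesis by (simp add: coeff_map_poly z baseF_def)
qed

end



lemma Gal_poly: "s \<in> Gal q \<Longrightarrow> (\<And>i. coeff p i \<in> baseF q) \<Longrightarrow> s (poly p (x::'a::field)) = poly p (s x)"
proof (induction p rule: pCons_induct)
  case 0 then show ?case by (simp add: Gal_0)
next
  case (pCons a p)
  have a: "a \<in> baseF q" using pCons.prems(2)[of 0] by simp
  have "coeff p i \<in> baseF q" for i using pCons.prems(2)[of "Suc i"] by simp
  hence "s (poly p x) = poly p (s x)" using pCons by blast
  then show ?case using a by (simp add: Gal_add[OF pCons.prems(1)] Gal_mult[OF pCons.prems(1)] Gal_fix[OF pCons.prems(1)])
qed

lemma tame_equiv:
  assumes F: "F \<in> tame_gens q n" and s: "s \<in> Gal q"
  shows "F (\<lambda>i. s (v i)) = (\<lambda>i. s (F v i :: 'a::field))"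
proof (cases "F \<in> affine_maps q n")
  case True
  then obtain A b where Fd: "F = (\<lambda>v i. if i < n then (\<Sum>j<n. A i j * v j) + b i else 0)"
    and A: "\<forall>i<n. \<forall>j<n. A i j \<in> baseF q" and b: "\<forall>i<n. b i \<in> baseF q"
    unfolding affine_maps_def by blast
  show ?thesis
  proof
    fix i show "F (\<lambda>i. s (v i)) i = s (F v i)"
    proof (cases "i < n")
      case True
      have "s ((\<Sum>j<n. A i j * v j) + b i) = (\<Sum>j<n. A i j * s (v j)) + b i"
        using True A b by (simp add: Gal_add[OF s] Gal_sum[OF s] Gal_mult[OF s] Gal_fix[OF s])
      thus ?thesis using True by (simp add: Fd)
    qed (simp add: Fd Gal_0[OF s])
  qed
next
  case False
  hence "F \<in> triangular_maps q n" using F by (simp add: tame_gens_def)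
  then obtain a f where Fd: "F = (\<lambda>v i. if i < n then a i * v i + f i v else 0)"
    and a: "\<forall>i<n. a i \<in> baseF q \<and> a i \<noteq> 0" and f: "\<forall>i<n. f i \<in> polyfun (baseF q) {i+1..<n}"
    unfolding triangular_maps_def by blast
  show ?thesis
  proof
    fix i show "F (\<lambda>i. s (v i)) i = s (F v i)"
    proof (cases "i < n")
      case True
      have "s (a i * v i + f i v) = a i * s (v i) + f i (\<lambda>i. s (v i))"
      proof -
        have "f i (\<lambda>i. s (v i)) = s (f i v)" using True f polyfun_Gal[OF _ s, of "f i"] by blast
        thus ?thesis using True a by (simp add: Gal_add[OF s] Gal_mult[OF s] Gal_fix[OF s])
      qed
      thus ?thesis using True by (simp add: Fd)
    qed (simp add: Fd Gal_0[OF s])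
  qed
qed

lemma image_orbit:
  assumes F: "F \<in> tame_gens q n"
  shows "F ` orbit q v = orbit q (F v :: nat \<Rightarrow> 'a::field)"
proof
  show "F ` orbit q v \<subseteq> orbit q (F v)"
  proof
    fix u assume "u \<in> F ` orbit q v"
    then obtain w where w: "w \<in> orbit q v" "u = F w" by blast
    obtain s where s: "s \<in> Gal q" "w = (\<lambda>i. s (v i))" using w(1) by (rule orbitE)
    have "u = (\<lambda>i. s (F v i))" using w(2) s tame_equiv[OF F s(1)] by simp
    thus "u \<in> orbit q (F v)" using orbitI[OF s(1)] by simp
  qed
next
  show "orbit q (F v) \<subseteq> F ` orbit q v"
  proof
    fix u assume "u \<in> orbit q (F v)"
    then obtain s where s: "s \<in> Gal q" "u = (\<lambda>i. s (F v i))" by (rule orbitE)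
    have "u = F (\<lambda>i. s (v i))" using s tame_equiv[OF F s(1)] by simp
    moreover have "(\<lambda>i. s (v i)) \<in> orbit q v" by (rule orbitI[OF s(1)])
    ultimately show "u \<in> F ` orbit q v" by blast
  qed
qed




locale stp = ffq q m ty for q m :: nat and ty :: "'a::field itself" +
  fixes n :: nat and \<theta> :: 'a
  assumes n3: "n \<ge> 3" and th: "\<forall>j. 0 < j \<and> j < m \<longrightarrow> \<theta>^(q^j) \<noteq> \<theta>"
begin

lemma q_pos: "q > 0" using q_ge2 by simp

definition dl :: "'a \<Rightarrow> 'a" where "dl y = 1 - y^(q^m - 1)"

lemma dl0: "dl 0 = 1"
proof -
  have "q^m - 1 \<noteq> 0" using card_ge2 card by simp
  thus ?thesis by (simp add: dl_def)
qed

lemma dlnz: "y \<noteq> 0 \<Longrightarrow> dl y = 0"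
  unfolding dl_def using pow_Q1[of y] by (metis diff_self)

lemma dl_eq: "dl y = (if y = 0 then 1 else 0)" using dl0 dlnz by simp

definition cnd :: "(nat \<Rightarrow> 'a) \<Rightarrow> bool" where
  "cnd v \<longleftrightarrow> (\<forall>j\<in>{2..<n-1}. v j = 0) \<and> poly (Pth \<theta>) (v (n-1)) = 0"

definition I1 :: "(nat \<Rightarrow> 'a) \<Rightarrow> 'a" where
  "I1 v = dl (v 1) * (\<Prod>j\<in>{2..<n-1}. dl (v j)) * dl (poly (Pth \<theta>) (v (n-1)))"

lemma prod_dl: "(\<Prod>j\<in>J. dl (v j)) = (if \<forall>j\<in>J. v j = 0 then 1 else 0)" if "finite J" for J
  using that by (induction J rule: finite_induct) (auto simp: dl_eq)

lemma I1_eq: "I1 v = (if v 1 = 0 \<and> cnd v then 1 else 0)"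
  unfolding I1_def cnd_def by (simp add: prod_dl dl_eq)

lemma dl_polyfun: "f \<in> polyfun (baseF q) S \<Longrightarrow> (\<lambda>v. dl (f v)) \<in> polyfun (baseF q) S"
proof -
  assume f: "f \<in> polyfun (baseF q) S"
  have m1: "(-1::'a) \<in> baseF q" using frob_neg[of 1 1] by (simp add: baseF_def)
  have "(\<lambda>v. 1 + (-1) * f v ^ (q^m - 1)) \<in> polyfun (baseF q) S"
    by (intro polyfun.add polyfun.const polyfun.mult polyfun_pow f m1) simp_all
  thus ?thesis by (simp add: dl_def)
qed

lemma I1_polyfun: "I1 \<in> polyfun (baseF q) {1..<n}"
proof -
  have v1: "(\<lambda>v. v 1) \<in> polyfun (baseF q) {1..<n}" using n3 by (intro polyfun.var) simp
  have vn: "(\<lambda>v. v (n-1)) \<in> polyfun (baseF q) {1..<n}" using n3 by (intro polyfun.var) simp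
  have "(\<lambda>v. dl (v 1) * (\<Prod>j\<in>{2..<n-1}. dl (v j)) * dl (poly (Pth \<theta>) (v (n-1)))) \<in> polyfun (baseF q) {1..<n}"
  proof (intro polyfun.mult)
    show "(\<lambda>v. dl (v 1)) \<in> polyfun (baseF q) {1..<n}" by (rule dl_polyfun[OF v1])
    show "(\<lambda>v. \<Prod>j\<in>{2..<n-1}. dl (v j)) \<in> polyfun (baseF q) {1..<n}"
    proof (rule polyfun_prod)
      fix j assume "j \<in> {2..<n-1}"
      hence "(\<lambda>v. v j) \<in> polyfun (baseF q) {1..<n}" by (intro polyfun.var) auto
      thus "(\<lambda>v. dl (v j)) \<in> polyfun (baseF q) {1..<n}" by (rule dl_polyfun)
    qed simp_all
    show "(\<lambda>v. dl (poly (Pth \<theta>) (v (n-1)))) \<in> polyfun (baseF q) {1..<n}"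
      by (intro dl_polyfun polyfun_poly Pth_coeff vn)
  qed
  thus ?thesis unfolding I1_def[abs_def] .
qed

definition fa :: "nat \<Rightarrow> (nat \<Rightarrow> 'a) \<Rightarrow> 'a" where
  "fa i = (if i = 0 then I1 else (\<lambda>v. 0))"
definition fa' :: "nat \<Rightarrow> (nat \<Rightarrow> 'a) \<Rightarrow> 'a" where
  "fa' i = (if i = 0 then (\<lambda>v. - I1 v) else (\<lambda>v. 0))"

definition alpha :: "(nat \<Rightarrow> 'a) \<Rightarrow> (nat \<Rightarrow> 'a)" where
  "alpha = (\<lambda>v i. if i < n then (\<lambda>_. 1::'a) i * v i + fa i v else 0)"
definition alpha' :: "(nat \<Rightarrow> 'a) \<Rightarrow> (nat \<Rightarrow> 'a)" where
  "alpha' = (\<lambda>v i. if i < n then (\<lambda>_. 1::'a) i * v i + fa' i v else 0)"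

lemma alpha_tame: "alpha \<in> tame_gens q n"
proof -
  have "\<forall>i<n. fa i \<in> polyfun (baseF q) {i+1..<n}"
  proof (intro allI impI)
    fix i assume "i < n"
    show "fa i \<in> polyfun (baseF q) {i+1..<n}"
    proof (cases "i = 0")
      case True then show ?thesis using I1_polyfun by (simp add: fa_def)
    next
      case False then show ?thesis using polyfun.const[of 0 "baseF q"] q_pos by (simp add: fa_def)
    qed
  qed
  hence "alpha \<in> triangular_maps q n"
    unfolding triangular_maps_def alpha_def by (intro CollectI exI conjI) (auto)
  thus ?thesis by (simp add: tame_gens_def)
qed

lemma alpha'_tame: "alpha' \<in> tame_gens q n"
proof -
  have m1: "(-1::'a) \<in> baseF q" using frob_neg[of 1 1] by (simp add: baseF_def)
  have "\<forall>i<n. fa' i \<in> polyfun (baseF q) {i+1..<n}"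
  proof (intro allI impI)
    fix i assume "i < n"
    show "fa' i \<in> polyfun (baseF q) {i+1..<n}"
    proof (cases "i = 0")
      case True
      have "(\<lambda>v. (-1) * I1 v) \<in> polyfun (baseF q) {1..<n}"
        by (intro polyfun.mult polyfun.const m1 I1_polyfun)
      then show ?thesis using True by (simp add: fa'_def)
    next
      case False then show ?thesis using polyfun.const[of 0 "baseF q"] q_pos by (simp add: fa'_def)
    qed
  qed
  hence "alpha' \<in> triangular_maps q n"
    unfolding triangular_maps_def alpha'_def by (intro CollectI exI conjI) (auto)
  thus ?thesis by (simp add: tame_gens_def)
qed

definition sw :: "nat \<Rightarrow> nat" where "sw i = (if i = 0 then 1 else if i = 1 then 0 else i)"
definition Am :: "nat \<Rightarrow> nat \<Rightarrow> 'a" where "Am i j = (if j = sw i then 1 else 0)"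

definition tau :: "(nat \<Rightarrow> 'a) \<Rightarrow> (nat \<Rightarrow> 'a)" where
  "tau = (\<lambda>v i. if i < n then (\<Sum>j<n. Am i j * v j) + (\<lambda>_. 0::'a) i else 0)"

lemma sw_lt: "i < n \<Longrightarrow> sw i < n" using n3 by (simp add: sw_def)
lemma sw_sw: "sw (sw i) = i" by (simp add: sw_def)

lemma sum_Am: "i < n \<Longrightarrow> (\<Sum>j<n. Am i j * v j) = v (sw i)"
proof -
  assume "i < n"
  have "(\<Sum>j<n. Am i j * v j) = (\<Sum>j<n. if j = sw i then v j else 0)"
    by (intro sum.cong) (auto simp: Am_def)
  also have "\<dots> = v (sw i)" using sw_lt[OF \<open>i<n\<close>] by simp
  finally show ?thesis .
qed

lemma tau_eq': "tau v = (\<lambda>i. if i < n then v (sw i) else 0)"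
  unfolding tau_def by (auto simp: sum_Am)

lemma tau_tame: "tau \<in> tame_gens q n"
proof -
  let ?W = "{v \<in> vecs n. \<forall>i. v i \<in> baseF q}"
  let ?M = "\<lambda>v i. if i < n then (\<Sum>j<n. Am i j * v j) else (0::'a)"
  let ?M' = "\<lambda>v i. if i < n then v (sw i) else (0::'a)"
  have M: "?M = ?M'" by (intro ext) (auto simp: sum_Am)
  have MM: "?M' (?M' v) = v" if "v \<in> ?W" for v
    using that by (auto simp: vecs_def sw_sw sw_lt)
  have MW: "?M' ` ?W \<subseteq> ?W" using q_pos by (auto simp: vecs_def)
  have bij: "bij_betw ?M ?W ?W" unfolding M
    by (rule bij_betw_byWitness[where f' = ?M']) (use MM MW in auto)
  have A: "\<forall>i<n. \<forall>j<n. Am i j \<in> baseF q" using q_pos by (simp add: Am_def)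
  have "tau \<in> affine_maps q n"
    unfolding affine_maps_def tau_def
    by (rule CollectI, rule exI[of _ Am], rule exI[of _ "\<lambda>_. 0"]) (use A bij q_pos in auto)
  thus ?thesis by (simp add: tame_gens_def)
qed

end



context stp begin

definition U :: "(nat \<Rightarrow> 'a) \<Rightarrow> 'a \<Rightarrow> 'a \<Rightarrow> (nat \<Rightarrow> 'a)" where
  "U v a b = v(0 := a, 1 := b)"

lemma U_vecs: "v \<in> vecs n \<Longrightarrow> U v a b \<in> vecs n"
  using n3 by (auto simp: U_def vecs_def)

lemma cnd_U: "cnd (U v a b) = cnd v"
proof -
  have "n - 1 \<noteq> 0" "n - 1 \<noteq> 1" using n3 by auto
  thus ?thesis unfolding cnd_def U_def by auto
qed

lemma tau_U: "v \<in> vecs n \<Longrightarrow> tau (U v a b) = U v b a"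
  using n3 by (auto simp: tau_eq' U_def vecs_def sw_def)

definition hh :: "bool \<Rightarrow> 'a \<Rightarrow> 'a" where "hh c b = (if b = 0 \<and> c then 1 else 0)"

lemma alpha_U: "v \<in> vecs n \<Longrightarrow> alpha (U v a b) = U v (a + hh (cnd v) b) b"
proof (rule ext)
  fix i assume v: "v \<in> vecs n"
  have I: "I1 (U v a b) = hh (cnd v) b" by (simp add: I1_eq cnd_U hh_def) (simp add: U_def)
  show "alpha (U v a b) i = U v (a + hh (cnd v) b) b i"
    using n3 v I by (auto simp: alpha_def fa_def U_def vecs_def)
qed

lemma alpha'_U: "v \<in> vecs n \<Longrightarrow> alpha' (U v a b) = U v (a - hh (cnd v) b) b"
proof (rule ext)
  fix i assume v: "v \<in> vecs n"
  have I: "I1 (U v a b) = hh (cnd v) b" by (simp add: I1_eq cnd_U hh_def) (simp add: U_def)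
  show "alpha' (U v a b) i = U v (a - hh (cnd v) b) b i"
    using n3 v I by (auto simp: alpha'_def fa'_def U_def vecs_def)
qed

definition CC :: "(nat \<Rightarrow> 'a) \<Rightarrow> (nat \<Rightarrow> 'a)" where
  "CC v = alpha (tau (alpha (tau (alpha' (tau (alpha' (tau v)))))))"

definition C2 :: "bool \<Rightarrow> 'a \<Rightarrow> 'a \<Rightarrow> 'a \<times> 'a" where
  "C2 c a b = (if c \<and> a = 0 \<and> b = 0 then (1, 0) else if c \<and> a = 1 \<and> b = 0 then (0, 1)
      else if c \<and> a = 0 \<and> b = 1 then (0, 0) else (a, b))"

lemma twoD: "(let a1 = a - hh c (b - hh c a); b1 = b - hh c a + hh c a1
    in (a1 + hh c b1, b1)) = C2 c a b"
  by (cases c) (auto simp: hh_def C2_def Let_def)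

lemma CC_U: assumes v: "v \<in> vecs n"
  shows "CC (U v a b) = U v (fst (C2 (cnd v) a b)) (snd (C2 (cnd v) a b))"
proof -
  have "CC (U v a b) = (let a1 = a - hh (cnd v) (b - hh (cnd v) a); b1 = b - hh (cnd v) a + hh (cnd v) a1
    in U v (a1 + hh (cnd v) b1) b1)"
    by (simp add: CC_def tau_U alpha_U alpha'_U v Let_def)
  also have "\<dots> = (case (let a1 = a - hh (cnd v) (b - hh (cnd v) a); b1 = b - hh (cnd v) a + hh (cnd v) a1
    in (a1 + hh (cnd v) b1, b1)) of (x, y) \<Rightarrow> U v x y)" by (simp add: Let_def)
  also have "\<dots> = U v (fst (C2 (cnd v) a b)) (snd (C2 (cnd v) a b))"
    unfolding twoD by (simp add: case_prod_beta)
  finally show ?thesis .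
qed

lemma U_self: "U v (v 0) (v 1) = v" by (simp add: U_def)

lemma CC_eq: assumes v: "v \<in> vecs n"
  shows "CC v = U v (fst (C2 (cnd v) (v 0) (v 1))) (snd (C2 (cnd v) (v 0) (v 1)))"
  using CC_U[OF v, of "v 0" "v 1"] unfolding U_self .

end



context stp begin

definition conjs :: "'a set" where "conjs = (\<lambda>j. \<theta>^(q^j)) ` {..<m}"

lemma card_conjs: "card conjs = m"
  unfolding conjs_def using card_image[OF conj_inj[OF th]] by simp

lemma Pth_theta: "poly (Pth \<theta>) \<theta> = 0"
  using Pth_root[of \<theta> \<theta>] m_pos by (metis power_0 power_one_right)

lemma orbit_shape:
  assumes w: "w (n-1) = \<theta>" "\<forall>i. i \<noteq> n-1 \<longrightarrow> w i \<in> baseF q"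
  shows "orbit q w = (\<lambda>t. w(n-1 := t)) ` conjs"
proof
  show "orbit q w \<subseteq> (\<lambda>t. w(n-1 := t)) ` conjs"
  proof
    fix u assume "u \<in> orbit q w"
    then obtain s where s: "s \<in> Gal q" "u = (\<lambda>i. s (w i))" by (rule orbitE)
    have u: "u = w(n-1 := s \<theta>)"
      using s w Gal_fix[OF s(1)] by (auto simp: fun_eq_iff)
    have "poly (Pth \<theta>) (s \<theta>) = s (poly (Pth \<theta>) \<theta>)"
      using Gal_poly[OF s(1) Pth_coeff] by simp
    also have "\<dots> = 0" by (simp add: Pth_theta Gal_0[OF s(1)])
    finally obtain j where "j < m" "s \<theta> = \<theta>^(q^j)" using Pth_root by blast
    hence "s \<theta> \<in> conjs" by (auto simp: conjs_def)
    thus "u \<in> (\<lambda>t. w(n-1 := t)) ` conjs" using u by blast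
  qed
next
  show "(\<lambda>t. w(n-1 := t)) ` conjs \<subseteq> orbit q w"
  proof
    fix u assume "u \<in> (\<lambda>t. w(n-1 := t)) ` conjs"
    then obtain j where j: "u = w(n-1 := \<theta>^(q^j))" by (auto simp: conjs_def)
    have "u = (\<lambda>i. (\<lambda>x. x^(q^j)) (w i))"
      using j w baseF_frob by (auto simp: fun_eq_iff)
    thus "u \<in> orbit q w" using orbitI[OF frob_Gal[of j]] by simp
  qed
qed

lemma card_orbit:
  assumes w: "w (n-1) = \<theta>" "\<forall>i. i \<noteq> n-1 \<longrightarrow> w i \<in> baseF q"
  shows "card (orbit q w) = m"
proof -
  have i: "inj_on (\<lambda>t. w(n-1 := t)) conjs"
    by (rule inj_onI) (metis fun_upd_same)
  show ?thesis unfolding orbit_shape[OF w] card_image[OF i] card_conjs ..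
qed

definition x0 :: "nat \<Rightarrow> 'a" where "x0 = (\<lambda>i. if i = n-1 then \<theta> else 0)"

lemma x0_vecs: "x0 \<in> vecs n" using n3 by (auto simp: x0_def vecs_def)

lemma x0_01: "x0 0 = 0" "x0 1 = 0" using n3 by (auto simp: x0_def)

lemma cnd_x0: "cnd x0" using n3 Pth_theta by (auto simp: cnd_def x0_def)

lemma U_x0_Xbar: assumes "a \<in> {0,1}" "b \<in> {0,1}"
  shows "orbit q (U x0 a b) \<in> Xbar q m n"
proof -
  have "n-1 \<noteq> 0" "n-1 \<noteq> 1" using n3 by auto
  hence "U x0 a b (n-1) = \<theta>" by (simp add: U_def x0_def)
  moreover have "\<forall>i. i \<noteq> n-1 \<longrightarrow> U x0 a b i \<in> baseF q" using assms q_pos by (auto simp: U_def x0_def)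
  ultimately have "card (orbit q (U x0 a b)) = m" by (rule card_orbit)
  hence "U x0 a b \<in> Xset q m n" using U_vecs[OF x0_vecs] by (simp add: Xset_def)
  thus ?thesis unfolding Xbar_def by blast
qed

lemma U_x0_coord: "U x0 a b 0 = a" "U x0 a b 1 = b" "U x0 a b (Suc 0) = b" by (auto simp: U_def)

lemma orbit_ne:
  assumes "orbit q (U x0 a b) = orbit q (U x0 a' b')" "c \<in> baseF q"
  shows "(a = c \<longleftrightarrow> a' = c) \<and> (b = c \<longleftrightarrow> b' = c)"
proof -
  have "U x0 a b \<in> orbit q (U x0 a' b')" using assms(1) orbit_self by metis
  thus ?thesis using orbit_coord[OF _ assms(2), of "U x0 a b" "U x0 a' b'" 0]
     orbit_coord[OF _ assms(2), of "U x0 a b" "U x0 a' b'" 1] by (simp add: U_x0_coord)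
qed

definition gg :: "(nat \<Rightarrow> 'a) set \<Rightarrow> (nat \<Rightarrow> 'a) set" where
  "gg = (\<lambda>Y. alpha ` (tau ` (alpha ` (tau ` (alpha' ` (tau ` (alpha' ` (tau ` Y))))))))"

lemma gg_mem: "gg \<in> Gimg q n"
  unfolding gg_def by (intro Gimg.step Gimg.id tau_tame alpha_tame alpha'_tame)

lemma gg_orbit: "gg (orbit q v) = orbit q (CC v)"
  by (simp add: gg_def CC_def image_orbit[OF tau_tame] image_orbit[OF alpha_tame] image_orbit[OF alpha'_tame])

end



context stp begin

lemma three_cycle: "is_3cycle_on (Xbar q m n) gg"
proof -
  define A where "A = orbit q (U x0 0 0)"
  define B where "B = orbit q (U x0 1 0)"
  define Cc where "Cc = orbit q (U x0 0 1)"
  have one: "(1::'a) \<in> baseF q" by simp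
  have mem: "A \<in> Xbar q m n" "B \<in> Xbar q m n" "Cc \<in> Xbar q m n"
    unfolding A_def B_def Cc_def by (auto intro: U_x0_Xbar)
  have AB: "A \<noteq> B" unfolding A_def B_def using orbit_ne[OF _ one, of 0 0 1 0] by auto
  have BC: "B \<noteq> Cc" unfolding B_def Cc_def using orbit_ne[OF _ one, of 1 0 0 1] by auto
  have AC: "A \<noteq> Cc" unfolding A_def Cc_def using orbit_ne[OF _ one, of 0 0 0 1] by auto
  have gU: "gg (orbit q (U x0 a b)) = orbit q (U x0 (fst (C2 True a b)) (snd (C2 True a b)))" for a b
    using gg_orbit CC_U[OF x0_vecs] cnd_x0 by simp
  have gA: "gg A = B" unfolding A_def B_def gU by (simp add: C2_def)
  have gB: "gg B = Cc" unfolding B_def Cc_def gU by (simp add: C2_def)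
  have gC: "gg Cc = A" unfolding A_def Cc_def gU by (simp add: C2_def)
  have rest: "gg Z = Z" if Z: "Z \<in> Xbar q m n - {A, B, Cc}" for Z
  proof -
    obtain v where v: "v \<in> Xset q m n" "Z = orbit q v" using Z unfolding Xbar_def by blast
    have vv: "v \<in> vecs n" using v(1) by (simp add: Xset_def)
    show ?thesis
    proof (cases "cnd v \<and> ((v 0 = 0 \<and> v 1 = 0) \<or> (v 0 = 1 \<and> v 1 = 0) \<or> (v 0 = 0 \<and> v 1 = 1))")
      case False
      hence "C2 (cnd v) (v 0) (v 1) = (v 0, v 1)" by (auto simp: C2_def)
      hence "CC v = v" using CC_eq[OF vv] U_self[of v] by simp
      thus ?thesis using v(2) gg_orbit by simp
    next
      case True
      hence c: "cnd v" and v01: "v 0 \<in> {0,1}" "v 1 \<in> {0,1}" by auto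
      obtain j where j: "j < m" "v (n-1) = \<theta>^(q^j)" using c Pth_root unfolding cnd_def by blast
      define w where "w = U x0 (v 0) (v 1)"
      have n1: "n-1 \<noteq> 0" "n-1 \<noteq> 1" "n - 1 < n" using n3 by auto
      have "v i = (w i)^(q^j)" for i
      proof -
        consider "i = 0" | "i = 1" | "i = n-1" | "i \<in> {2..<n-1}" | "i \<ge> n" using n1 by force
        thus ?thesis
        proof cases
          case 1 then show ?thesis using v01 baseF_frob[of "v 0" j] q_pos by (auto simp: w_def U_def)
        next
          case 2 then show ?thesis using v01 baseF_frob[of "v 1" j] q_pos by (auto simp: w_def U_def)
        next
          case 3 then show ?thesis using j n1 by (simp add: w_def U_def x0_def)
        next
          case 4 then show ?thesis using c q_pos n1 by (auto simp: w_def U_def x0_def cnd_def)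
        next
          case 5 then show ?thesis using vv q_pos n1 by (auto simp: w_def U_def x0_def vecs_def)
        qed
      qed
      hence "v = (\<lambda>i. (\<lambda>x. x^(q^j)) (w i))" by auto
      hence "v \<in> orbit q w" using orbitI[OF frob_Gal[of j]] by simp
      hence "Z = orbit q w" using v(2) orbit_eq by simp
      moreover have "orbit q w \<in> {A, B, Cc}" using True unfolding w_def A_def B_def Cc_def by auto
      ultimately show ?thesis using Z by blast
    qed
  qed
  have *: "A \<noteq> B \<and> B \<noteq> Cc \<and> A \<noteq> Cc \<and> gg A = B \<and> gg B = Cc \<and> gg Cc = A \<and>
    (\<forall>x\<in>Xbar q m n - {A, B, Cc}. gg x = x)" using AB BC AC gA gB gC rest by simp
  show ?thesis unfolding is_3cycle_on_def
    by (rule bexI[OF _ mem(1)], rule bexI[OF _ mem(2)], rule bexI[OF _ mem(3)]) (rule *)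
qed

end

theorem mainTheorem10:
  fixes q m n :: nat
  assumes "\<exists>p k. prime p \<and> k > 0 \<and> q = p ^ k"
    and "finite (UNIV :: ('a::field) set)" and "card (UNIV :: 'a set) = q ^ m"
    and "n \<ge> 3"
  shows "\<exists>g \<in> (Gimg q n :: (((nat \<Rightarrow> 'a) set \<Rightarrow> (nat \<Rightarrow> 'a) set) set)).
           is_3cycle_on (Xbar q m n) g"
proof -
  interpret ffq q m "TYPE('a)" by unfold_locales (use assms in auto)
  obtain \<theta> :: 'a where th: "\<forall>j. 0 < j \<and> j < m \<longrightarrow> \<theta>^(q^j) \<noteq> \<theta>" using theta_ex by blast
  interpret stp q m "TYPE('a)" n \<theta> by unfold_locales (use assms th in auto)
  show ?thesis using gg_mem three_cycle by blast
qed



end
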